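(* Let $f$ and $g>0$ be functions on $(0,\infty)$ such that $\mathcal{F}(x)=\int_0^\infty f(t)(t+1)^{-x}\,dt$ and $\mathcal{G}(x)=\int_0^\infty g(t)(t+1)^{-x}\,dt$ exist for all $x\in(0,\infty)$. If there exists $t^*\in(0,\infty)$ such that $t\mapsto f(t)/g(t)$ is increasing (resp. decreasing) on $(0,t^* )$ and decreasing (resp. increasing) on $(t^*,\infty)$, then (i) $x\mapsto\mathcal{F}(x)/\mathcal{G}(x)$ is decreasing (resp. increasing) on $(0,\infty)$ if and only if $H_{\mathcal{F},\mathcal{G}}(0^+)\ge0$ (resp. $\le0$); (ii) if $H_{\mathcal{F},\mathcal{G}}(0^+)<0$ (resp. $>0$), there exists $x^*>0$ such that $x\mapsto\mathcal{F}(x)/\mathcal{G}(x)$ is increasing (resp. decreasing) on $(0,x^* )$ and decreasing (resp. increasing) on $(x^*,\infty)$.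
   Context: For differentiable $F,G$ with $G\ne0$, $G'\neq0$, $H_{F,G}=\frac{F'}{G'}G-F$, and $H_{F,G}(0^+)=\lim_{x\to0^+}H_{F,G}(x)$. *)

theory Defs
  imports "HOL-Analysis.Analysis"
begin

definition H_fun :: "(real \<Rightarrow> real) \<Rightarrow> (real \<Rightarrow> real) \<Rightarrow> real \<Rightarrow> real" where
  "H_fun F G x = deriv F x / deriv G x * G x - F x"

definition transf :: "(real \<Rightarrow> real) \<Rightarrow> real \<Rightarrow> real" where
  "transf f x = (LINT t:{0<..}|lborel. f t * (t + 1) powr (- x))"

end

theory Submission
  imports Defs
begin


definition IC :: "(real \<Rightarrow> real) \<Rightarrow> bool" where
  "IC k \<longleftrightarrow> (\<forall>x>0. set_integrable lborel {0<..} (\<lambda>t. k t * (t + 1) powr (- x)))"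

lemma w_exp: "(t::real) > 0 \<Longrightarrow> (t + 1) powr a = exp (a * ln (t + 1))"
  by (simp add: powr_def)

lemma ln_bound: assumes "(t::real) > 0" "e > 0" shows "ln (t + 1) \<le> (t + 1) powr e / e"
proof -
  have "e * ln (t+1) = ln ((t+1) powr e)" using assms by (simp add: ln_powr)
  also have "\<dots> \<le> (t+1) powr e - 1" using assms by (intro ln_le_minus_one) auto
  finally have "e * ln (t+1) \<le> (t+1) powr e" by simp
  thus ?thesis using assms by (simp add: field_simps)
qed

lemma IC_bound:
  fixes k Q :: "real \<Rightarrow> real" and C x :: real
  assumes int: "set_integrable lborel {0<..} (\<lambda>t. k t * (t + 1) powr (- x))"
    and Qm: "Q \<in> borel_measurable borel"
    and bd: "\<And>t. t > 0 \<Longrightarrow> \<bar>k t * Q t\<bar> \<le> C * \<bar>k t * (t + 1) powr (- x)\<bar>"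
  shows "set_integrable lborel {0<..} (\<lambda>t. k t * Q t)"
proof (rule set_integrable_bound[where f="\<lambda>t. C * (k t * (t + 1) powr (- x))"])
  show "set_integrable lborel {0<..} (\<lambda>t. C * (k t * (t + 1) powr (- x)))" by (rule set_integrable_mult_right) (rule int)
  have m1: "(\<lambda>t. indicator {0<..} t *\<^sub>R (k t * (t + 1) powr (- x))) \<in> borel_measurable lborel"
    using int unfolding set_integrable_def by (rule borel_measurable_integrable)
  have eq: "(\<lambda>t. indicator {0<..} t *\<^sub>R (k t * Q t)) =
        (\<lambda>t. (indicator {0<..} t *\<^sub>R (k t * (t + 1) powr (- x))) * (Q t / (t + 1) powr (- x)))"
    by (auto simp: indicator_def fun_eq_iff)
  show "set_borel_measurable lborel {0<..} (\<lambda>t. k t * Q t)"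
    unfolding set_borel_measurable_def eq using m1 Qm by measurable
  show "AE t in lborel. t \<in> {0<..} \<longrightarrow> norm (k t * Q t) \<le> norm (C * (k t * (t + 1) powr (- x)))"
  proof (rule AE_I2, intro impI)
    fix t :: real assume "t \<in> {0<..}"
    hence "\<bar>k t * Q t\<bar> \<le> C * \<bar>k t * (t + 1) powr (- x)\<bar>" using bd by auto
    also have "\<dots> \<le> \<bar>C\<bar> * \<bar>k t * (t + 1) powr (- x)\<bar>" by (rule mult_right_mono) auto
    also have "\<dots> = \<bar>C * (k t * (t + 1) powr (- x))\<bar>" by (simp add: abs_mult)
    finally show "norm (k t * Q t) \<le> norm (C * (k t * (t + 1) powr (- x)))" by simp
  qed
qed

lemma exp_taylor_bound: fixes y :: real shows "\<bar>exp y - 1 - y\<bar> \<le> y\<^sup>2 * exp \<bar>y\<bar>"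
proof -
  have a: "1 + y \<le> exp y" by (rule exp_ge_add_one_self)
  have b: "1 - y \<le> exp (- y)" using exp_ge_add_one_self[of "-y"] by simp
  have c: "exp y * exp (-y) = 1" by (simp add: exp_minus)
  have d: "exp y * (1 - y) \<le> 1" using mult_left_mono[OF b, of "exp y"] c by simp
  have nn: "0 \<le> exp y - 1 - y" using a by linarith
  have up: "exp y - 1 - y \<le> y * (exp y - 1)" using d by (simp add: algebra_simps)
  show ?thesis
  proof (cases "y \<ge> 0")
    case True
    have "exp y - 1 \<le> y * exp y" using d by (simp add: algebra_simps)
    hence "y * (exp y - 1) \<le> y * (y * exp y)" using True by (rule mult_left_mono)
    thus ?thesis using nn up True by (simp add: power2_eq_square)
  next
    case False
    have "y * (exp y - 1) = (-y) * (1 - exp y)" by (simp add: algebra_simps)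
    also have "\<dots> \<le> (-y) * (-y)" using False a by (intro mult_left_mono; linarith)
    also have "\<dots> \<le> (-y) * (-y) * exp \<bar>y\<bar>" using False by simp
    finally show ?thesis using nn up by (simp add: power2_eq_square)
  qed
qed

lemma pt_bound:
  fixes t h x :: real
  assumes "t > 0" "\<bar>h\<bar> \<le> x / 2"
  shows "\<bar>(t+1) powr (-(x+h)) - (t+1) powr (-x) + h * ln (t+1) * (t+1) powr (-x)\<bar>
          \<le> h\<^sup>2 * (ln (t+1))\<^sup>2 * (t+1) powr (-(x/2))"
proof -
  define u where "u = ln (t+1)"
  have u0: "u \<ge> 0" using assms unfolding u_def by simp
  have e1: "(t+1) powr (-(x+h)) = exp (-x*u) * exp (-h*u)"
    using w_exp[OF assms(1), of "-(x+h)"] unfolding u_def by (simp add: exp_add[symmetric] algebra_simps)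
  have e2: "(t+1) powr (-x) = exp (-x*u)"
    using w_exp[OF assms(1), of "-x"] unfolding u_def by simp
  have e3: "(t+1) powr (-(x/2)) = exp (-(x/2)*u)"
    using w_exp[OF assms(1), of "-(x/2)"] unfolding u_def by simp
  have "(t+1) powr (-(x+h)) - (t+1) powr (-x) + h * ln (t+1) * (t+1) powr (-x)
      = exp (-x*u) * (exp (-h*u) - 1 - (-h*u))"
    unfolding e1 e2 u_def[symmetric] by (simp add: algebra_simps)
  hence "\<bar>(t+1) powr (-(x+h)) - (t+1) powr (-x) + h * ln (t+1) * (t+1) powr (-x)\<bar>
      = exp (-x*u) * \<bar>exp (-h*u) - 1 - (-h*u)\<bar>" by (simp add: abs_mult)
  also have "\<dots> \<le> exp (-x*u) * ((-h*u)\<^sup>2 * exp \<bar>-h*u\<bar>)"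
    by (intro mult_left_mono exp_taylor_bound) auto
  also have "\<dots> = h\<^sup>2 * u\<^sup>2 * (exp (-x*u) * exp (\<bar>h\<bar>*u))"
    using u0 by (simp add: power2_eq_square abs_mult)
  also have "exp (-x*u) * exp (\<bar>h\<bar>*u) = exp (-x*u + \<bar>h\<bar>*u)"
    by (simp only: exp_add)
  also have "exp (-x*u + \<bar>h\<bar>*u) \<le> exp (-(x/2)*u)"
  proof -
    have "\<bar>h\<bar>*u \<le> (x/2)*u" using assms(2) u0 by (rule mult_right_mono)
    thus ?thesis by simp
  qed
  hence "h\<^sup>2 * u\<^sup>2 * exp (-x*u + \<bar>h\<bar>*u) \<le> h\<^sup>2 * u\<^sup>2 * exp (-(x/2)*u)"
    by (intro mult_left_mono) auto
  also have "h\<^sup>2 * u\<^sup>2 * exp (-(x/2)*u) = h\<^sup>2 * (ln (t+1))\<^sup>2 * (t+1) powr (-(x/2))"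
    unfolding e3 u_def by simp
  finally show ?thesis .
qed

lemma IC_u: assumes "IC k" shows "IC (\<lambda>t. k t * ln (t + 1))"
  unfolding IC_def
proof (intro allI impI)
  fix y :: real assume y: "y > 0"
  have int: "set_integrable lborel {0<..} (\<lambda>t. k t * (t + 1) powr (- (y/2)))"
    using assms y unfolding IC_def by auto
  have "set_integrable lborel {0<..} (\<lambda>t. k t * (ln (t+1) * (t + 1) powr (- y)))"
  proof (rule IC_bound[OF int, where C="2/y"])
    show "(\<lambda>t. ln (t + 1) * (t + 1) powr - y) \<in> borel_measurable borel" by measurable
  next
    fix t :: real assume t: "t > 0"
    have "ln (t+1) \<le> (t+1) powr (y/2) / (y/2)" using ln_bound[OF t, of "y/2"] y by simp
    hence "ln (t+1) * (t + 1) powr - y \<le> ((t+1) powr (y/2) / (y/2)) * (t + 1) powr - y"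
      by (rule mult_right_mono) simp
    also have "\<dots> = 2/y * ((t+1) powr (y/2) * (t+1) powr (-y))"
      by simp
    also have "(t+1) powr (y/2) * (t+1) powr (-y) = (t+1) powr (y/2 + -y)"
      by (simp only: powr_add)
    also have "y/2 + -y = -(y/2)" by simp
    finally have A: "ln (t+1) * (t + 1) powr - y \<le> 2/y * (t+1) powr (-(y/2))" .
    have B: "ln (t+1) * (t + 1) powr - y \<ge> 0" using t by simp
    have "\<bar>k t * (ln (t + 1) * (t + 1) powr - y)\<bar> = \<bar>k t\<bar> * (ln (t + 1) * (t + 1) powr - y)"
      using B t by (simp add: abs_mult)
    also have "\<dots> \<le> \<bar>k t\<bar> * (2/y * (t+1) powr (-(y/2)))"
      using A by (rule mult_left_mono) simp
    also have "\<dots> = 2 / y * \<bar>k t * (t + 1) powr - (y / 2)\<bar>"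
      by (simp add: abs_mult)
    finally show "\<bar>k t * (ln (t + 1) * (t + 1) powr - y)\<bar> \<le> 2 / y * \<bar>k t * (t + 1) powr - (y / 2)\<bar>" .
  qed
  thus "set_integrable lborel {0<..} (\<lambda>t. k t * ln (t + 1) * (t + 1) powr - y)"
    by (simp add: mult.assoc)
qed

lemma IC_at: "IC k \<Longrightarrow> x > 0 \<Longrightarrow> set_integrable lborel {0<..} (\<lambda>t. k t * (t + 1) powr (- x))"
  unfolding IC_def by auto

lemma IC_lin:
  assumes "IC k1" "IC k2"
  shows "IC (\<lambda>t. a * k1 t + b * k2 t)"
    and "x > 0 \<Longrightarrow> transf (\<lambda>t. a * k1 t + b * k2 t) x = a * transf k1 x + b * transf k2 x"
proof -
  have eq: "\<And>x. (\<lambda>t. (a * k1 t + b * k2 t) * (t + 1) powr (- x)) =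
     (\<lambda>t. a * (k1 t * (t + 1) powr (- x)) + b * (k2 t * (t + 1) powr (- x)))"
    by (auto simp: algebra_simps)
  show "IC (\<lambda>t. a * k1 t + b * k2 t)"
    unfolding IC_def eq
    by (intro allI impI set_integral_add set_integrable_mult_right IC_at[OF assms(1)] IC_at[OF assms(2)])
  assume x: "x > 0"
  show "transf (\<lambda>t. a * k1 t + b * k2 t) x = a * transf k1 x + b * transf k2 x"
    unfolding transf_def eq
    by (subst set_integral_add) (auto intro!: set_integrable_mult_right IC_at[OF assms(1) x] IC_at[OF assms(2) x])
qed

lemma transf_deriv:
  assumes k: "IC k" and x: "x > 0"
  shows "(transf k has_real_derivative - transf (\<lambda>t. k t * ln (t + 1)) x) (at x)"
proof -
  define ku where "ku = (\<lambda>t. k t * ln (t + 1))"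
  define kuu where "kuu = (\<lambda>t. ku t * ln (t + 1))"
  have ku: "IC ku" unfolding ku_def by (rule IC_u[OF k])
  have kuu: "IC kuu" unfolding kuu_def by (rule IC_u[OF ku])
  define K where "K = (LINT t:{0<..}|lborel. \<bar>kuu t * (t + 1) powr (- (x/2))\<bar>)"
  define D where "D = - transf ku x"
  have kuu2: "set_integrable lborel {0<..} (\<lambda>t. \<bar>kuu t * (t + 1) powr (- (x/2))\<bar>)"
    by (rule set_integrable_abs, rule IC_at[OF kuu]) (use x in simp)
  have main: "\<bar>(transf k (x+h) - transf k x)/h - D\<bar> \<le> \<bar>h\<bar> * K"
    if h0: "h \<noteq> 0" and hx: "\<bar>h\<bar> < x/2" for h
  proof -
    have xh: "x + h > 0" using hx x by linarith
    define E where "E = (\<lambda>t. k t * (t + 1) powr (-(x+h)) - k t * (t + 1) powr (-x)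
                         + h * (ku t * (t + 1) powr (-x)))"
    have i1: "set_integrable lborel {0<..} (\<lambda>t. k t * (t + 1) powr (-(x+h)))"
      by (rule IC_at[OF k xh])
    have i2: "set_integrable lborel {0<..} (\<lambda>t. k t * (t + 1) powr (-x))"
      by (rule IC_at[OF k x])
    have i3: "set_integrable lborel {0<..} (\<lambda>t. h * (ku t * (t + 1) powr (-x)))"
      by (rule set_integrable_mult_right, rule IC_at[OF ku x])
    have iE: "set_integrable lborel {0<..} E"
      unfolding E_def by (intro set_integral_add set_integral_diff i1 i2 i3)
    have intE: "(LINT t:{0<..}|lborel. E t) = transf k (x+h) - transf k x + h * transf ku x"
      unfolding E_def transf_def
      by (subst set_integral_add[OF set_integral_diff(1)[OF i1 i2] i3],
          subst set_integral_diff(2)[OF i1 i2]) simp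
    have "(transf k (x+h) - transf k x)/h - D = (LINT t:{0<..}|lborel. E t) / h"
      unfolding intE D_def using h0 by (simp add: field_simps)
    hence "\<bar>(transf k (x+h) - transf k x)/h - D\<bar> = \<bar>LINT t:{0<..}|lborel. E t\<bar> / \<bar>h\<bar>"
      by simp
    also have "\<bar>LINT t:{0<..}|lborel. E t\<bar> \<le> (LINT t:{0<..}|lborel. \<bar>E t\<bar>)"
      using set_integral_norm_bound[OF iE] by simp
    also have "(LINT t:{0<..}|lborel. \<bar>E t\<bar>) \<le>
         (LINT t:{0<..}|lborel. h\<^sup>2 * \<bar>kuu t * (t + 1) powr (- (x/2))\<bar>)"
    proof (rule set_integral_mono)
      show "set_integrable lborel {0<..} (\<lambda>t. \<bar>E t\<bar>)" by (rule set_integrable_abs[OF iE])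
      show "set_integrable lborel {0<..} (\<lambda>t. h\<^sup>2 * \<bar>kuu t * (t + 1) powr (- (x/2))\<bar>)"
        by (rule set_integrable_mult_right, rule kuu2)
      fix t :: real assume "t \<in> {0<..}"
      hence t: "t > 0" by simp
      have "E t = k t * ((t+1) powr (-(x+h)) - (t+1) powr (-x) + h * ln (t+1) * (t+1) powr (-x))"
        unfolding E_def ku_def by (simp add: algebra_simps)
      hence "\<bar>E t\<bar> = \<bar>k t\<bar> * \<bar>(t+1) powr (-(x+h)) - (t+1) powr (-x) + h * ln (t+1) * (t+1) powr (-x)\<bar>"
        by (simp add: abs_mult)
      also have "\<dots> \<le> \<bar>k t\<bar> * (h\<^sup>2 * (ln (t+1))\<^sup>2 * (t+1) powr (-(x/2)))"
        by (rule mult_left_mono[OF pt_bound[OF t]]) (use hx in auto)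
      also have "\<dots> = h\<^sup>2 * \<bar>kuu t * (t + 1) powr (- (x/2))\<bar>"
        unfolding kuu_def ku_def using t by (simp add: abs_mult power2_eq_square)
      finally show "\<bar>E t\<bar> \<le> h\<^sup>2 * \<bar>kuu t * (t + 1) powr (- (x/2))\<bar>" .
    qed
    also have "(LINT t:{0<..}|lborel. h\<^sup>2 * \<bar>kuu t * (t + 1) powr (- (x/2))\<bar>) = h\<^sup>2 * K"
      unfolding K_def by simp
    finally have "\<bar>(transf k (x+h) - transf k x)/h - D\<bar> \<le> h\<^sup>2 * K / \<bar>h\<bar>"
      using h0 by (simp add: divide_right_mono)
    also have "h\<^sup>2 * K / \<bar>h\<bar> = \<bar>h\<bar> * K" using h0 by (simp add: power2_eq_square field_simps)
    finally show ?thesis .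
  qed
  have "((\<lambda>h. (transf k (x+h) - transf k x)/h - D) \<longlongrightarrow> 0) (at 0)"
  proof (rule tendsto_0_le[where f="\<lambda>h. h" and K=K])
    show "((\<lambda>h::real. h) \<longlongrightarrow> 0) (at 0)" by (rule tendsto_ident_at)
    have "\<forall>\<^sub>F h in at 0. h \<noteq> 0 \<and> \<bar>h\<bar> < x/2"
      unfolding eventually_at by (rule exI[of _ "x/2"]) (use x in auto)
    thus "\<forall>\<^sub>F h in at 0. norm ((transf k (x+h) - transf k x)/h - D) \<le> norm h * K"
      by (eventually_elim) (use main in auto)
  qed
  thus ?thesis unfolding DERIV_def D_def ku_def LIM_zero_iff .
qed

lemma AE_finite_notin: "finite F \<Longrightarrow> AE t in lborel. (t::real) \<notin> F"
  by (rule AE_not_in, rule finite_imp_null_set_lborel)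

lemma set_integral_pos_interval:
  fixes k :: "real \<Rightarrow> real"
  assumes int: "set_integrable lborel {0<..} k"
    and nn: "AE t in lborel. t > 0 \<longrightarrow> k t \<ge> 0"
    and ab: "0 \<le> a" "a < b" and pos: "\<And>t. a < t \<Longrightarrow> t < b \<Longrightarrow> k t > 0"
  shows "(LINT t:{0<..}|lborel. k t) > 0"
proof -
  define F where "F = (\<lambda>t. indicator {0<..} t *\<^sub>R k t)"
  have iF: "integrable lborel F" using int unfolding F_def set_integrable_def .
  have nF: "AE t in lborel. 0 \<le> F t"
    using nn by eventually_elim (auto simp: F_def indicator_def)
  have ge: "0 \<le> integral\<^sup>L lborel F" by (rule integral_nonneg_AE[OF nF])
  have "integral\<^sup>L lborel F \<noteq> 0"
  proof
    assume "integral\<^sup>L lborel F = 0"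
    hence "AE t in lborel. F t = 0" using integral_nonneg_eq_0_iff_AE[OF iF nF] by simp
    hence "AE t in lborel. t \<notin> {a<..<b}"
      by eventually_elim (use ab pos in \<open>force simp: F_def indicator_def\<close>)
    hence "{a<..<b} \<in> null_sets lborel" by (subst AE_iff_null_sets) auto
    hence "emeasure lborel {a<..<b} = 0" by auto
    thus False using ab by simp
  qed
  with ge have "0 < integral\<^sup>L lborel F" by simp
  thus ?thesis unfolding set_lebesgue_integral_def F_def .
qed

lemma sign_lemma:
  fixes h :: "real \<Rightarrow> real"
  assumes h: "IC h" and x0: "x0 > 0" and x: "x > 0"
    and z0: "transf h x0 = 0" and z1: "transf (\<lambda>t. h t * ln (t + 1)) x0 = 0"
    and le: "AE t in lborel. t > 0 \<longrightarrow>
        h t * (\<alpha> * exp (-(x-x0) * ln (t+1)) + \<beta> + \<gamma> * ln (t+1)) \<le> 0"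
    and ab: "0 \<le> a" "a < b"
    and lt: "\<And>t. a < t \<Longrightarrow> t < b \<Longrightarrow> h t * (\<alpha> * exp (-(x-x0) * ln (t+1)) + \<beta> + \<gamma> * ln (t+1)) < 0"
  shows "\<alpha> * transf h x < 0"
proof -
  have hu: "IC (\<lambda>t. h t * ln (t + 1))" by (rule IC_u[OF h])
  define J where "J = (\<lambda>t. \<alpha> * (h t * (t+1) powr (-x)) + \<beta> * (h t * (t+1) powr (-x0))
        + \<gamma> * (h t * ln (t + 1) * (t+1) powr (-x0)))"
  have i1: "set_integrable lborel {0<..} (\<lambda>t. \<alpha> * (h t * (t+1) powr (-x)))"
    by (rule set_integrable_mult_right, rule IC_at[OF h x])
  have i2: "set_integrable lborel {0<..} (\<lambda>t. \<beta> * (h t * (t+1) powr (-x0)))"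
    by (rule set_integrable_mult_right, rule IC_at[OF h x0])
  have i3: "set_integrable lborel {0<..} (\<lambda>t. \<gamma> * (h t * ln (t + 1) * (t+1) powr (-x0)))"
    by (rule set_integrable_mult_right, rule IC_at[OF hu x0])
  have iJ: "set_integrable lborel {0<..} J"
    unfolding J_def by (intro set_integral_add i1 i2 i3)
  have intJ: "(LINT t:{0<..}|lborel. J t) = \<alpha> * transf h x"
    unfolding J_def
    apply (subst set_integral_add(2)[OF set_integral_add(1)[OF i1 i2] i3])
    apply (subst set_integral_add(2)[OF i1 i2])
    using z0 z1 unfolding transf_def by simp
  have Jeq: "J t = (t+1) powr (-x0) * (h t * (\<alpha> * exp (-(x-x0) * ln (t+1)) + \<beta> + \<gamma> * ln (t+1)))"
    if t: "t > 0" for t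
  proof -
    have "(t+1) powr (-x) = (t+1) powr (-x0) * exp (-(x-x0) * ln (t+1))"
      unfolding w_exp[OF t] by (simp only: exp_add[symmetric]) (simp add: algebra_simps)
    thus ?thesis unfolding J_def by (simp add: algebra_simps)
  qed
  have "(LINT t:{0<..}|lborel. (-1) * J t) > 0"
  proof (rule set_integral_pos_interval[OF _ _ ab])
    show "set_integrable lborel {0<..} (\<lambda>t. (-1) * J t)"
      by (rule set_integrable_mult_right, rule iJ)
    show "AE t in lborel. t > 0 \<longrightarrow> 0 \<le> (-1) * J t"
      using le by eventually_elim (auto simp: Jeq intro!: mult_nonneg_nonpos)
    fix t assume "a < t" "t < b"
    hence "t > 0" using ab by linarith
    thus "0 < (-1) * J t" using lt[OF \<open>a < t\<close> \<open>t < b\<close>]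
      by (simp add: Jeq mult_pos_neg)
  qed
  moreover have "(LINT t:{0<..}|lborel. (-1) * J t) = - (LINT t:{0<..}|lborel. J t)"
    by (simp only: set_integral_mult_right)
  ultimately show ?thesis using intJ by simp
qed

lemma exp_strict: fixes y :: real assumes "y \<noteq> 0" shows "1 + y < exp y"
proof (cases "1 + y/2 < 0")
  case True
  hence "1 + y < 0" by linarith
  thus ?thesis using exp_gt_zero[of y] by linarith
next
  case False
  have "1 + y/2 \<le> exp (y/2)" by (rule exp_ge_add_one_self)
  hence "(1 + y/2)\<^sup>2 \<le> (exp (y/2))\<^sup>2" using False by (intro power_mono) auto
  also have "(exp (y/2))\<^sup>2 = exp y" by (simp add: power2_eq_square exp_add[symmetric])
  finally have "(1 + y/2)\<^sup>2 \<le> exp y" .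
  moreover have "(1 + y/2)\<^sup>2 = 1 + y + y\<^sup>2/4" by (simp add: power2_eq_square algebra_simps)
  moreover have "y\<^sup>2 > 0" using assms by simp
  ultimately show ?thesis by linarith
qed

lemma cross_slope:
  fixes s a b c :: real
  assumes s: "s \<noteq> 0" and abc: "a < b" "b < c"
  shows "(exp (s*b) - exp (s*a)) * (c - b) < (exp (s*c) - exp (s*b)) * (b - a)"
proof -
  have e1: "exp (s*a) = exp (s*b) * exp (-(s*(b-a)))" by (simp add: exp_add[symmetric] algebra_simps)
  have e2: "exp (s*c) = exp (s*b) * exp (s*(c-b))" by (simp add: exp_add[symmetric] algebra_simps)
  have n1: "s*(b-a) \<noteq> 0" "s*(c-b) \<noteq> 0" using s abc by auto
  have "1 + (-(s*(b-a))) < exp (-(s*(b-a)))" by (rule exp_strict) (use n1 in simp)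
  hence "exp (s*b) * (1 - s*(b-a)) < exp (s*b) * exp (-(s*(b-a)))" by simp
  hence A: "exp (s*b) - exp (s*a) < s*(b-a) * exp (s*b)" unfolding e1 by (simp add: algebra_simps)
  have "1 + s*(c-b) < exp (s*(c-b))" by (rule exp_strict) (use n1 in simp)
  hence "exp (s*b) * (1 + s*(c-b)) < exp (s*b) * exp (s*(c-b))" by simp
  hence B: "s*(c-b) * exp (s*b) < exp (s*c) - exp (s*b)" unfolding e2 by (simp add: algebra_simps)
  have "(exp (s*b) - exp (s*a)) * (c - b) < (s*(b-a) * exp (s*b)) * (c - b)"
    using A abc by (intro mult_strict_right_mono) auto
  also have "\<dots> = (s*(c-b) * exp (s*b)) * (b - a)" by (simp add: algebra_simps)
  also have "\<dots> < (exp (s*c) - exp (s*b)) * (b - a)"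
    using B abc by (intro mult_strict_right_mono) auto
  finally show ?thesis .
qed

lemma chord_sign:
  fixes s u1 u2 :: real
  assumes s: "s \<noteq> 0" and u12: "u1 < u2"
  defines "B \<equiv> (exp (s*u2) - exp (s*u1)) / (u2 - u1)"
  defines "A \<equiv> exp (s*u1) - B * u1"
  shows "u < u1 \<Longrightarrow> exp (s*u) - A - B*u > 0"
    and "u1 < u \<Longrightarrow> u < u2 \<Longrightarrow> exp (s*u) - A - B*u < 0"
    and "u2 < u \<Longrightarrow> exp (s*u) - A - B*u > 0"
proof -
  have d: "u2 - u1 > 0" using u12 by simp
  have key: "exp (s*u) - A - B*u = ((exp (s*u) - exp (s*u1)) * (u2 - u1) - (exp (s*u2) - exp (s*u1)) * (u - u1)) / (u2 - u1)"
  proof -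
    have "exp (s*u) - A - B*u = (exp (s*u) - exp (s*u1)) - B*(u-u1)" unfolding A_def by (simp add: algebra_simps)
    also have "\<dots> = ((exp (s*u) - exp (s*u1)) * (u2 - u1) - (exp (s*u2) - exp (s*u1)) * (u - u1)) / (u2 - u1)"
      unfolding B_def using d by (simp add: diff_divide_distrib[symmetric] times_divide_eq_left) (simp add: diff_divide_distrib)
    finally show ?thesis .
  qed
  {
    assume u: "u < u1"
    have "(exp (s*u1) - exp (s*u)) * (u2 - u1) < (exp (s*u2) - exp (s*u1)) * (u1 - u)"
      by (rule cross_slope[OF s u u12])
    hence "((exp (s*u) - exp (s*u1)) * (u2 - u1) - (exp (s*u2) - exp (s*u1)) * (u - u1)) > 0"
      by (simp add: algebra_simps)
    thus "exp (s*u) - A - B*u > 0" unfolding key using d by simp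
  }
  {
    assume u: "u1 < u" "u < u2"
    have "(exp (s*u) - exp (s*u1)) * (u2 - u) < (exp (s*u2) - exp (s*u)) * (u - u1)"
      by (rule cross_slope[OF s u])
    hence "((exp (s*u) - exp (s*u1)) * (u2 - u1) - (exp (s*u2) - exp (s*u1)) * (u - u1)) < 0"
      by (simp add: algebra_simps)
    thus "exp (s*u) - A - B*u < 0" unfolding key using d by (simp add: divide_neg_pos)
  }
  {
    assume u: "u2 < u"
    have "(exp (s*u2) - exp (s*u1)) * (u - u2) < (exp (s*u) - exp (s*u2)) * (u2 - u1)"
      by (rule cross_slope[OF s u12 u])
    hence "((exp (s*u) - exp (s*u1)) * (u2 - u1) - (exp (s*u2) - exp (s*u1)) * (u - u1)) > 0"
      by (simp add: algebra_simps)
    thus "exp (s*u) - A - B*u > 0" unfolding key using d by simp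
  }
qed

lemma transf_pos:
  assumes k: "IC k" and pos: "\<And>t. t > 0 \<Longrightarrow> k t > 0" and y: "y > 0"
  shows "transf k y > 0"
  unfolding transf_def
proof (rule set_integral_pos_interval[of _ 0 1])
  show "set_integrable lborel {0<..} (\<lambda>t. k t * (t + 1) powr - y)" by (rule IC_at[OF k y])
  show "AE t in lborel. 0 < t \<longrightarrow> 0 \<le> k t * (t + 1) powr - y"
    by (rule AE_I2) (auto intro!: mult_nonneg_nonneg less_imp_le[OF pos])
  fix t :: real assume "0 < t" "t < 1"
  thus "0 < k t * (t + 1) powr - y" using pos by simp
qed auto

lemma AE_notin_list: "AE t in lborel. (t::real) \<notin> set xs"
  by (rule AE_finite_notin) simp

lemma crit_max:
  fixes f g :: "real \<Rightarrow> real"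
  assumes g_pos: "\<And>t. t > 0 \<Longrightarrow> g t > 0" and f: "IC f" and g: "IC g" and t0: "t0 > 0"
    and mono: "strict_mono_on {0<..<t0} (\<lambda>t. f t / g t)"
    and anti: "strict_antimono_on {t0<..} (\<lambda>t. f t / g t)"
    and x0: "x0 > 0" and x: "x > 0" "x \<noteq> x0"
    and c: "transf f x0 = c * transf g x0"
    and c1: "transf (\<lambda>t. f t * ln (t + 1)) x0 = c * transf (\<lambda>t. g t * ln (t + 1)) x0"
  shows "transf f x < c * transf g x"
proof -
  define \<phi> where "\<phi> = (\<lambda>t. f t / g t)"
  define h where "h = (\<lambda>t. 1 * f t + (-c) * g t)"
  have h: "IC h" unfolding h_def by (rule IC_lin(1)[OF f g])
  have th: "\<And>y. y > 0 \<Longrightarrow> transf h y = transf f y - c * transf g y"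
    unfolding h_def by (subst IC_lin(2)[OF f g]) auto
  have hu_eq: "(\<lambda>t. h t * ln (t + 1)) = (\<lambda>t. 1 * (f t * ln (t + 1)) + (-c) * (g t * ln (t + 1)))"
    unfolding h_def by (auto simp: algebra_simps)
  have z0: "transf h x0 = 0" using th[OF x0] c by simp
  have z1: "transf (\<lambda>t. h t * ln (t + 1)) x0 = 0"
    unfolding hu_eq by (subst IC_lin(2)[OF IC_u[OF f] IC_u[OF g] x0]) (use c1 in simp)
  have hsign: "h t = g t * (\<phi> t - c)" if "t > 0" for t
    using g_pos[OF that] unfolding h_def \<phi>_def by (simp add: field_simps)
  have hneg: "h t < 0" if "t > 0" "\<phi> t < c" for t
    using hsign[OF that(1)] g_pos[OF that(1)] that(2) by (simp add: mult_pos_neg)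
  have hpos: "h t > 0" if "t > 0" "\<phi> t > c" for t
    using hsign[OF that(1)] g_pos[OF that(1)] that(2) by simp
  have mono': "\<And>a b. 0 < a \<Longrightarrow> a < b \<Longrightarrow> b < t0 \<Longrightarrow> \<phi> a < \<phi> b"
    using mono unfolding \<phi>_def strict_mono_on_def by auto
  have anti': "\<And>a b. t0 < a \<Longrightarrow> a < b \<Longrightarrow> \<phi> b < \<phi> a"
    using anti unfolding \<phi>_def monotone_on_def by auto
  define S where "S = {t \<in> {0<..<t0}. \<phi> t < c}"
  define p where "p = Sup (insert 0 S)"
  have bS: "bdd_above (insert 0 S)" unfolding S_def using t0 by (intro bdd_aboveI[of _ t0]) auto
  have p0: "0 \<le> p" unfolding p_def by (rule cSup_upper[OF _ bS]) simp
  have pt0: "p \<le> t0" unfolding p_def by (rule cSup_least) (use t0 in \<open>auto simp: S_def\<close>)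
  have P2: "\<phi> t < c" if tt: "0 < t" "t < p" for t
  proof -
    obtain s where s: "s \<in> insert 0 S" "t < s" using tt(2) less_cSup_iff[OF _ bS] unfolding p_def by blast
    hence "s \<in> S" using tt(1) by auto
    hence "s < t0" "\<phi> s < c" unfolding S_def by auto
    thus ?thesis using mono'[OF tt(1) s(2)] by linarith
  qed
  have P3: "\<phi> t > c" if "p < t" "t < t0" for t
  proof (rule ccontr)
    assume "\<not> \<phi> t > c"
    define t' where "t' = (p + t) / 2"
    have t': "0 < t'" "p < t'" "t' < t" using that p0 unfolding t'_def by auto
    have "\<phi> t' < c" using mono'[OF t'(1) t'(3) that(2)] \<open>\<not> \<phi> t > c\<close> by linarith
    hence "t' \<in> S" unfolding S_def using t' that by auto
    hence "t' \<le> p" unfolding p_def by (intro cSup_upper bS) auto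
    thus False using t' by linarith
  qed
  define Q where "Q = {t \<in> {t0<..}. \<phi> t \<le> c}"
  show ?thesis
  proof (cases "Q = {}")
    case True
    hence QB: "\<phi> t > c" if "t > t0" for t using that unfolding Q_def by force
    have "0 * transf h x < 0"
    proof (rule sign_lemma[OF h x0 x(1) z0 z1, where \<beta>="ln (p+1)" and \<gamma>="-1" and a=t0 and b="t0+1"])
      show "AE t in lborel. 0 < t \<longrightarrow> h t * (0 * exp (- (x - x0) * ln (t + 1)) + ln (p + 1) + - 1 * ln (t + 1)) \<le> 0"
        using AE_notin_list[of "[p, t0]"]
      proof eventually_elim
        case (elim t)
        show ?case
        proof
          assume t: "0 < t"
          show "h t * (0 * exp (- (x - x0) * ln (t + 1)) + ln (p + 1) + - 1 * ln (t + 1)) \<le> 0"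
          proof (cases "t < p")
            case True
            have "ln (t+1) < ln (p+1)" using True t by simp
            thus ?thesis using hneg[OF t P2[OF t True]] by (simp add: mult_nonpos_nonneg)
          next
            case False
            hence tp: "p < t" using elim by auto
            have "ln (p+1) < ln (t+1)" using tp p0 by simp
            moreover have "h t > 0"
              using elim tp P3 QB t by (intro hpos[OF t]) (cases "t < t0"; auto)
            ultimately show ?thesis by (simp add: mult_nonneg_nonpos)
          qed
        qed
      qed
    next
      fix t assume "t0 < t" "t < t0 + 1"
      hence t: "t > 0" "p < t" using t0 pt0 by auto
      have "ln (p+1) < ln (t+1)" using t p0 by simp
      moreover have "h t > 0" using QB \<open>t0 < t\<close> by (intro hpos[OF t(1)]) auto
      ultimately show "h t * (0 * exp (- (x - x0) * ln (t + 1)) + ln (p + 1) + - 1 * ln (t + 1)) < 0"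
        by (simp add: mult_pos_neg)
    qed (use t0 in auto)
    thus ?thesis by simp
  next
    case False
    have bQ: "bdd_below Q" unfolding Q_def by (intro bdd_belowI[of _ t0]) auto
    define q where "q = Inf Q"
    have qt0: "t0 \<le> q" unfolding q_def by (rule cInf_greatest[OF False]) (auto simp: Q_def)
    have Q2: "\<phi> t > c" if "t0 < t" "t < q" for t
    proof (rule ccontr)
      assume "\<not> \<phi> t > c"
      hence "t \<in> Q" unfolding Q_def using that by auto
      hence "q \<le> t" unfolding q_def by (rule cInf_lower[OF _ bQ])
      thus False using that by linarith
    qed
    have Q3: "\<phi> t < c" if tq: "q < t" for t
    proof -
      obtain s where s: "s \<in> Q" "s < t" using tq cInf_less_iff[OF False bQ] unfolding q_def by blast
      hence "t0 < s" "\<phi> s \<le> c" unfolding Q_def by auto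
      thus ?thesis using anti'[OF \<open>t0 < s\<close> s(2)] by linarith
    qed
    show ?thesis
    proof (cases "p = q")
      case True
      hence pq: "p = t0" "q = t0" using pt0 qt0 by auto
      have "0 * transf h x < 0"
      proof (rule sign_lemma[OF h x0 x(1) z0 z1, where \<beta>="1" and \<gamma>="0" and a=0 and b="t0"])
        show "AE t in lborel. 0 < t \<longrightarrow> h t * (0 * exp (- (x - x0) * ln (t + 1)) + 1 + 0 * ln (t + 1)) \<le> 0"
          using AE_notin_list[of "[t0]"]
        proof eventually_elim
          case (elim t)
          show ?case
          proof
            assume t: "0 < t"
            have "h t < 0"
            proof (cases "t < t0")
              case True thus ?thesis using hneg[OF t P2[OF t]] pq by auto
            next
              case False thus ?thesis using hneg[OF t Q3] pq elim by auto
            qed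
            thus "h t * (0 * exp (- (x - x0) * ln (t + 1)) + 1 + 0 * ln (t + 1)) \<le> 0" by simp
          qed
        qed
      next
        fix t assume t: "0 < t" "t < t0"
        thus "h t * (0 * exp (- (x - x0) * ln (t + 1)) + 1 + 0 * ln (t + 1)) < 0"
          using hneg[OF t(1) P2[OF t(1)]] pq by simp
      qed (use t0 in auto)
      thus ?thesis by simp
    next
      case False
      hence pq: "p < q" using pt0 qt0 by linarith
      define s where "s = -(x - x0)"
      have s: "s \<noteq> 0" using x unfolding s_def by simp
      define u1 where "u1 = ln (p + 1)"
      define u2 where "u2 = ln (q + 1)"
      have u12: "u1 < u2" unfolding u1_def u2_def using pq p0 by simp
      define B where "B = (exp (s*u2) - exp (s*u1)) / (u2 - u1)"
      define A where "A = exp (s*u1) - B * u1"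
      note ch = chord_sign[OF s u12, folded B_def, folded A_def]
      have psi: "1 * exp (- (x - x0) * ln (t + 1)) + (-A) + (-B) * ln (t + 1)
                 = exp (s * ln (t+1)) - A - B * ln (t+1)" for t
        unfolding s_def by simp
      have neg: "h t * (1 * exp (- (x - x0) * ln (t + 1)) + (-A) + (-B) * ln (t + 1)) < 0"
        if t: "0 < t" "t \<notin> {p, q, t0}" for t
        unfolding psi
      proof -
        consider "t < p" | "p < t" "t < q" | "q < t" using t by force
        thus "h t * (exp (s * ln (t+1)) - A - B * ln (t+1)) < 0"
        proof cases
          case 1
          have "ln (t+1) < u1" unfolding u1_def using 1 t by simp
          hence "exp (s * ln (t+1)) - A - B * ln (t+1) > 0" by (rule ch(1))
          thus ?thesis using hneg[OF t(1) P2[OF t(1) 1]] by (simp add: mult_neg_pos)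
        next
          case 2
          have "u1 < ln (t+1)" "ln (t+1) < u2" unfolding u1_def u2_def using 2 t p0 by auto
          hence "exp (s * ln (t+1)) - A - B * ln (t+1) < 0" by (rule ch(2))
          moreover have "h t > 0"
          proof (cases "t < t0")
            case True thus ?thesis using hpos[OF t(1) P3[OF 2(1) True]] by simp
          next
            case False hence "t0 < t" using t by auto
            thus ?thesis using hpos[OF t(1) Q2[OF _ 2(2)]] by auto
          qed
          ultimately show ?thesis by (simp add: mult_pos_neg)
        next
          case 3
          have "u2 < ln (t+1)" unfolding u2_def using 3 t pq p0 by simp
          hence "exp (s * ln (t+1)) - A - B * ln (t+1) > 0" by (rule ch(3))
          thus ?thesis using hneg[OF t(1) Q3[OF 3]] by (simp add: mult_neg_pos)
        qed
      qed
      obtain a b where ab: "0 \<le> a" "a < b" "\<And>t. a < t \<Longrightarrow> t < b \<Longrightarrow> t \<notin> {p, q, t0}"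
      proof (cases "p < t0")
        case True thus ?thesis using that[of p t0] p0 qt0 by auto
      next
        case False hence "t0 < q" "p = t0" using pq pt0 by auto
        thus ?thesis using that[of t0 q] t0 by auto
      qed
      have "1 * transf h x < 0"
      proof (rule sign_lemma[OF h x0 x(1) z0 z1, where \<beta>="-A" and \<gamma>="-B" and a=a and b=b])
        show "AE t in lborel. 0 < t \<longrightarrow> h t * (1 * exp (- (x - x0) * ln (t + 1)) + - A + - B * ln (t + 1)) \<le> 0"
          using AE_notin_list[of "[p, q, t0]"]
          by eventually_elim (use neg in \<open>auto intro: less_imp_le\<close>)
      next
        fix t assume "a < t" "t < b"
        thus "h t * (1 * exp (- (x - x0) * ln (t + 1)) + - A + - B * ln (t + 1)) < 0"
          using neg ab by auto
      qed (use ab in auto)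
      thus ?thesis using th[OF x(1)] by simp
    qed
  qed
qed

lemma asym:
  fixes k :: "real \<Rightarrow> real"
  assumes k: "IC k" and a: "0 < a1" "a1 < a2"
    and nn: "\<And>t. 0 < t \<Longrightarrow> t < a2 \<Longrightarrow> k t \<ge> 0"
    and pos: "\<And>t. 0 < t \<Longrightarrow> t < a1 \<Longrightarrow> k t > 0"
  shows "\<exists>X. \<forall>x\<ge>X. transf k x > 0"
proof -
  define Qf where "Qf = (\<lambda>t::real. indicator {..<a1} t * (t+1) powr (-1::real))"
  have k1: "set_integrable lborel {0<..} (\<lambda>t. k t * (t + 1) powr (- 1))"
    using IC_at[OF k, of 1] by simp
  have iQ: "set_integrable lborel {0<..} (\<lambda>t. k t * Qf t)"
  proof (rule IC_bound[OF k1, where C=1])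
    show "Qf \<in> borel_measurable borel" unfolding Qf_def by measurable
    fix t :: real assume "t > 0"
    thus "\<bar>k t * Qf t\<bar> \<le> 1 * \<bar>k t * (t + 1) powr - 1\<bar>"
      unfolding Qf_def by (auto simp: indicator_def abs_mult)
  qed
  have iA: "set_integrable lborel {0<..} (\<lambda>t. \<bar>k t * (t + 1) powr (- 1)\<bar>)"
    by (rule set_integrable_abs[OF k1])
  define P where "P = (LINT t:{0<..}|lborel. k t * Qf t)"
  define V where "V = (LINT t:{0<..}|lborel. \<bar>k t * (t + 1) powr (- 1)\<bar>)"
  have P: "P > 0" unfolding P_def
  proof (rule set_integral_pos_interval[OF iQ _ _ a(1)])
    show "AE t in lborel. 0 < t \<longrightarrow> 0 \<le> k t * Qf t"
      by (rule AE_I2) (use a nn in \<open>auto simp: Qf_def indicator_def\<close>)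
    fix t :: real assume "0 < t" "t < a1"
    thus "0 < k t * Qf t" using pos by (simp add: Qf_def indicator_def)
  qed simp
  have V: "V \<ge> 0" unfolding V_def set_lebesgue_integral_def
    by (rule integral_nonneg_AE, rule AE_I2) (auto simp: indicator_def)
  define u1 where "u1 = ln (a1 + 1)"
  define u2 where "u2 = ln (a2 + 1)"
  have u12: "u1 < u2" "0 < u1" unfolding u1_def u2_def using a by auto
  define X where "X = 1 + V / (P * (u2 - u1))"
  have "transf k x > 0" if x: "x \<ge> X" for x
  proof -
    have "V / (P * (u2 - u1)) \<ge> 0" using V P u12 by (intro divide_nonneg_pos) auto
    hence x1: "x \<ge> 1" using x unfolding X_def by linarith
    have xp: "x > 0" using x1 by simp
    define e1 where "e1 = exp (-(x-1)*u1)"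
    define e2 where "e2 = exp (-(x-1)*u2)"
    have lb: "e1 * (k t * Qf t) - e2 * \<bar>k t * (t + 1) powr (- 1)\<bar> \<le> k t * (t + 1) powr (- x)"
      if t: "t \<in> {0<..}" for t
    proof -
      have t0: "t > 0" using t by simp
      define u where "u = ln (t+1)"
      have u0: "u \<ge> 0" unfolding u_def using t0 by simp
      have wx: "(t + 1) powr (- x) = (t + 1) powr (- 1) * exp (-(x-1)*u)"
        unfolding w_exp[OF t0] u_def by (simp only: exp_add[symmetric]) (simp add: algebra_simps)
      have w1: "(t + 1) powr (- 1) > 0" using t0 by simp
      have e2n: "e2 \<ge> 0" unfolding e2_def by simp
      show ?thesis
      proof (cases "t < a1")
        case True
        have "u \<le> u1" unfolding u_def u1_def using True t0 by simp
        hence "e1 \<le> exp (-(x-1)*u)" unfolding e1_def using x1 by (simp add: mult_left_mono_neg)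
        hence A1: "e1 * (k t * (t + 1) powr (- 1)) \<le> exp (-(x-1)*u) * (k t * (t + 1) powr (- 1))"
          using nn[OF t0] True a w1 by (intro mult_right_mono) auto
        have A2: "e2 * \<bar>k t * (t + 1) powr (- 1)\<bar> \<ge> 0" using e2n by simp
        have Qt: "Qf t = (t+1) powr (-1)" unfolding Qf_def using True by simp
        have A3: "k t * (t + 1) powr (- x) = exp (-(x-1)*u) * (k t * (t + 1) powr (- 1))"
          unfolding wx by simp
        show ?thesis unfolding Qt using A1 A2 A3 by linarith
      next
        case False
        hence Q0: "Qf t = 0" unfolding Qf_def by simp
        show ?thesis
        proof (cases "t < a2")
          case True
          have A1: "k t * (t + 1) powr (- x) \<ge> 0" using nn[OF t0 True] by simp
          have A2: "e2 * \<bar>k t * (t + 1) powr (- 1)\<bar> \<ge> 0" using e2n by simp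
          show ?thesis unfolding Q0 using A1 A2 by linarith
        next
          case False
          have "u2 \<le> u" unfolding u_def u2_def using False t0 a by simp
          hence "exp (-(x-1)*u) \<le> e2" unfolding e2_def using x1 by (simp add: mult_left_mono_neg)
          hence "\<bar>k t * (t + 1) powr (- 1)\<bar> * exp (-(x-1)*u) \<le> \<bar>k t * (t + 1) powr (- 1)\<bar> * e2"
            by (intro mult_left_mono) auto
          moreover have "- (\<bar>k t * (t + 1) powr (- 1)\<bar> * exp (-(x-1)*u)) \<le> k t * (t + 1) powr (- x)"
            unfolding wx using abs_ge_minus_self[of "k t * (t + 1) powr (- 1) * exp (-(x-1)*u)"]
            by (simp add: abs_mult mult.assoc)
          ultimately show ?thesis unfolding Q0 by (simp add: mult.commute del: abs_mult)
        qed
      qed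
    qed
    have "e1 * P - e2 * V \<le> transf k x"
    proof -
      have "e1 * P - e2 * V = (LINT t:{0<..}|lborel. e1 * (k t * Qf t) - e2 * \<bar>k t * (t + 1) powr (- 1)\<bar>)"
      proof -
        have iQ2: "set_integrable lborel {0<..} (\<lambda>t. e1 * (k t * Qf t))"
          by (rule set_integrable_mult_right) (rule iQ)
        have iA2: "set_integrable lborel {0<..} (\<lambda>t. e2 * \<bar>k t * (t + 1) powr (- 1)\<bar>)"
          by (rule set_integrable_mult_right) (rule iA)
        show ?thesis unfolding P_def V_def set_integral_diff(2)[OF iQ2 iA2] set_integral_mult_right ..
      qed
      also have "\<dots> \<le> transf k x" unfolding transf_def
      proof (rule set_integral_mono[OF _ IC_at[OF k xp] lb])
        have iQ2: "set_integrable lborel {0<..} (\<lambda>t. e1 * (k t * Qf t))"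
          by (rule set_integrable_mult_right) (rule iQ)
        have iA2: "set_integrable lborel {0<..} (\<lambda>t. e2 * \<bar>k t * (t + 1) powr (- 1)\<bar>)"
          by (rule set_integrable_mult_right) (rule iA)
        show "set_integrable lborel {0<..} (\<lambda>t. e1 * (k t * Qf t) - e2 * \<bar>k t * (t + 1) powr - 1\<bar>)"
          by (rule set_integral_diff(1)[OF iQ2 iA2])
      qed
      finally show ?thesis .
    qed
    moreover have "e2 * V < e1 * P"
    proof -
      define y where "y = (x-1)*(u2-u1)"
      have y: "y \<ge> V / P" unfolding y_def using x u12 P unfolding X_def
        by (simp add: field_simps)
      have "V < P * exp y"
      proof -
        have "V \<le> P * y" using y P by (simp add: field_simps)
        also have "P * y < P * exp y" using P exp_gt_self[of y] by simp
        finally show ?thesis .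
      qed
      hence "V * exp (-y) < P * exp y * exp (-y)" by simp
      hence "V * exp (-y) < P" by (simp add: exp_minus field_simps)
      hence "V * exp (-y) * e1 < P * e1" unfolding e1_def by simp
      moreover have "exp (-y) * e1 = e2" unfolding e1_def e2_def y_def
        by (simp only: exp_add[symmetric]) (simp add: algebra_simps)
      ultimately show ?thesis by (simp add: algebra_simps)
    qed
    ultimately show ?thesis by linarith
  qed
  thus ?thesis by blast
qed

lemma R_deriv:
  assumes g_pos: "\<And>t. t > 0 \<Longrightarrow> g t > 0" and f: "IC f" and g: "IC g" and x: "x > 0"
  shows "((\<lambda>x. transf f x / transf g x) has_real_derivative
     ((- transf (\<lambda>t. f t * ln (t + 1)) x) * transf g x - transf f x * (- transf (\<lambda>t. g t * ln (t + 1)) x))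
       / (transf g x * transf g x)) (at x)"
  by (rule DERIV_divide[OF transf_deriv[OF f x] transf_deriv[OF g x]])
     (use transf_pos[OF g g_pos x] in simp)

lemma R_cont:
  assumes g_pos: "\<And>t. t > 0 \<Longrightarrow> g t > 0" and f: "IC f" and g: "IC g"
  shows "continuous_on {0<..} (\<lambda>x. transf f x / transf g x)"
  by (rule DERIV_continuous_on[where D="\<lambda>x. ((- transf (\<lambda>t. f t * ln (t + 1)) x) * transf g x - transf f x * (- transf (\<lambda>t. g t * ln (t + 1)) x))
       / (transf g x * transf g x)"])
     (use R_deriv[OF g_pos f g] in \<open>auto intro: has_field_derivative_at_within\<close>)

lemma crit_point:
  assumes g_pos: "\<And>t. t > 0 \<Longrightarrow> g t > 0" and f: "IC f" and g: "IC g" and t0: "t0 > 0"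
    and mono: "strict_mono_on {0<..<t0} (\<lambda>t. f t / g t)"
    and anti: "strict_antimono_on {t0<..} (\<lambda>t. f t / g t)"
    and z: "z > 0" and dz: "((\<lambda>x. transf f x / transf g x) has_real_derivative 0) (at z)"
    and x: "x > 0" "x \<noteq> z"
  shows "transf f x / transf g x < transf f z / transf g z"
proof -
  define c where "c = transf f z / transf g z"
  have Gz: "transf g z > 0" by (rule transf_pos[OF g g_pos z])
  have Gx: "transf g x > 0" by (rule transf_pos[OF g g_pos x(1)])
  have "((- transf (\<lambda>t. f t * ln (t + 1)) z) * transf g z - transf f z * (- transf (\<lambda>t. g t * ln (t + 1)) z))
       / (transf g z * transf g z) = 0"
    using DERIV_unique[OF R_deriv[OF g_pos f g z] dz] .
  hence "(- transf (\<lambda>t. f t * ln (t + 1)) z) * transf g z - transf f z * (- transf (\<lambda>t. g t * ln (t + 1)) z) = 0"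
    using Gz by simp
  hence c1: "transf (\<lambda>t. f t * ln (t + 1)) z = c * transf (\<lambda>t. g t * ln (t + 1)) z"
    unfolding c_def using Gz by (simp add: field_simps)
  have c0: "transf f z = c * transf g z" unfolding c_def using Gz by simp
  have "transf f x < c * transf g x"
    by (rule crit_max[OF g_pos f g t0 mono anti z x c0 c1])
  thus ?thesis unfolding c_def[symmetric] using Gx by (simp add: field_simps)
qed

lemma not_incr:
  assumes g_pos: "\<And>t. t > 0 \<Longrightarrow> g t > 0" and f: "IC f" and g: "IC g" and t0: "t0 > 0"
    and mono: "strict_mono_on {0<..<t0} (\<lambda>t. f t / g t)"
  shows "\<exists>x2>0. \<exists>X. \<forall>x\<ge>X. transf f x / transf g x < transf f x2 / transf g x2"
proof -
  define \<phi> where "\<phi> = (\<lambda>t. f t / g t)"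
  define R where "R = (\<lambda>x. transf f x / transf g x)"
  have mono': "\<And>a b. 0 < a \<Longrightarrow> a < b \<Longrightarrow> b < t0 \<Longrightarrow> \<phi> a < \<phi> b"
    using mono unfolding \<phi>_def strict_mono_on_def by auto
  have Gp: "\<And>x. x > 0 \<Longrightarrow> transf g x > 0" by (rule transf_pos[OF g g_pos])
  have step1: "\<exists>x2>0. \<exists>a. 0 < a \<and> a < t0 \<and> \<phi> a < R x2"
  proof (rule ccontr)
    assume H: "\<not> ?thesis"
    hence H': "R x \<le> \<phi> a" if "x > 0" "0 < a" "a < t0" for x a using that by force
    define m where "m = Inf (\<phi> ` {0<..<t0})"
    have ne: "\<phi> ` {0<..<t0} \<noteq> {}" using t0 by auto
    have bb: "bdd_below (\<phi> ` {0<..<t0})" using H'[of 1] by (intro bdd_belowI[of _ "R 1"]) auto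
    have Rm: "R x \<le> m" if "x > 0" for x
      unfolding m_def by (rule cInf_greatest[OF ne]) (use H' that in auto)
    have mphi: "m < \<phi> a" if "0 < a" "a < t0" for a
    proof -
      have "m \<le> \<phi> (a/2)" unfolding m_def by (rule cInf_lower[OF _ bb]) (use that in auto)
      also have "\<phi> (a/2) < \<phi> a" using that by (intro mono') auto
      finally show ?thesis .
    qed
    define k where "k = (\<lambda>t. 1 * f t + (-m) * g t)"
    have k: "IC k" unfolding k_def by (rule IC_lin(1)[OF f g])
    have kpos: "k t > 0" if "0 < t" "t < t0" for t
    proof -
      have "m < f t / g t" using mphi[OF that] unfolding \<phi>_def .
      hence "m * g t < f t" using g_pos[OF that(1)] by (simp add: field_simps)
      thus ?thesis unfolding k_def by simp
    qed
    obtain X where X: "\<And>x. x \<ge> X \<Longrightarrow> transf k x > 0"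
      using asym[OF k, of "t0/2" t0] t0 kpos by (auto intro: less_imp_le)
    define x where "x = max X 1"
    have x: "x > 0" "x \<ge> X" unfolding x_def by auto
    have "transf k x = transf f x - m * transf g x" unfolding k_def
      by (subst IC_lin(2)[OF f g x(1)]) simp
    hence "m * transf g x < transf f x" using X[OF x(2)] by simp
    hence "m < R x" unfolding R_def using Gp[OF x(1)] by (simp add: field_simps)
    thus False using Rm[OF x(1)] by simp
  qed
  then obtain x2 a where xa: "x2 > 0" "0 < a" "a < t0" "\<phi> a < R x2" by blast
  define k where "k = (\<lambda>t. \<phi> a * g t + (-1) * f t)"
  have k: "IC k" unfolding k_def by (rule IC_lin(1)[OF g f])
  have kpos: "k t > 0" if "0 < t" "t < a" for t
  proof -
    have "f t / g t < \<phi> a" using mono'[OF that xa(3)] unfolding \<phi>_def .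
    hence "f t < \<phi> a * g t" using g_pos[OF that(1)] by (simp add: field_simps)
    thus ?thesis unfolding k_def by simp
  qed
  obtain X where X: "\<And>x. x \<ge> X \<Longrightarrow> transf k x > 0"
    using asym[OF k, of "a/2" a] xa kpos by (auto intro: less_imp_le)
  have "R x < R x2" if "x \<ge> max X 1" for x
  proof -
    have x: "x > 0" "x \<ge> X" using that by auto
    have "transf k x = \<phi> a * transf g x - transf f x" unfolding k_def
      by (subst IC_lin(2)[OF g f x(1)]) simp
    hence "transf f x < \<phi> a * transf g x" using X[OF x(2)] by simp
    hence "R x < \<phi> a" unfolding R_def using Gp[OF x(1)] by (simp add: field_simps)
    thus ?thesis using xa by simp
  qed
  thus ?thesis using xa(1) unfolding R_def by blast
qed

lemma shape_lemma:
  assumes g_pos: "\<And>t. t > 0 \<Longrightarrow> g t > 0" and f: "IC f" and g: "IC g" and t0: "t0 > 0"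
    and mono: "strict_mono_on {0<..<t0} (\<lambda>t. f t / g t)"
    and anti: "strict_antimono_on {t0<..} (\<lambda>t. f t / g t)"
  shows "strict_antimono_on {0<..} (\<lambda>x. transf f x / transf g x) \<or>
    (\<exists>x0>0. strict_mono_on {0<..<x0} (\<lambda>x. transf f x / transf g x) \<and>
             strict_antimono_on {x0<..} (\<lambda>x. transf f x / transf g x))"
proof -
  define R where "R = (\<lambda>x. transf f x / transf g x)"
  have cont: "continuous_on {0<..} R" unfolding R_def by (rule R_cont[OF g_pos f g])
  have diff: "R differentiable (at x)" if "x > 0" for x
    unfolding R_def real_differentiable_def using R_deriv[OF g_pos f g that] by blast
  have crit: "R x < R z" if "z > 0" "(R has_real_derivative 0) (at z)" "x > 0" "x \<noteq> z" for x z
    using crit_point[OF g_pos f g t0 mono anti that(1) _ that(3,4)] that(2) unfolding R_def by blast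
  have rolle: "\<exists>z. a < z \<and> z < b \<and> (R has_real_derivative 0) (at z)"
    if "0 < a" "a < b" "R a = R b" for a b
  proof (rule Rolle[OF that(2,3)])
    show "continuous_on {a..b} R" by (rule continuous_on_subset[OF cont]) (use that in auto)
    fix x assume "a < x" "x < b" thus "R differentiable (at x)" using diff that by auto
  qed
  have inj: "inj_on R S" if S: "S \<subseteq> {0<..}" "is_interval S"
     and nc: "\<And>a b z. a \<in> S \<Longrightarrow> b \<in> S \<Longrightarrow> min a b < z \<Longrightarrow> z < max a b \<Longrightarrow>
                 (R has_real_derivative 0) (at z) \<Longrightarrow> False" for S
  proof (rule inj_onI, rule ccontr)
    fix a b assume ab: "a \<in> S" "b \<in> S" "R a = R b" "a \<noteq> b"
    have "\<exists>z. min a b < z \<and> z < max a b \<and> (R has_real_derivative 0) (at z)"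
      using ab S(1) by (intro rolle) (auto simp: min_def max_def)
    then obtain z where z: "min a b < z" "z < max a b" "(R has_real_derivative 0) (at z)" by blast
    show False using nc[OF ab(1,2) z] .
  qed
  show ?thesis
  proof (cases "\<exists>z>0. (R has_real_derivative 0) (at z)")
    case True
    then obtain z where z: "z > 0" "(R has_real_derivative 0) (at z)" by blast
    have uniq: "w = z" if "w > 0" "(R has_real_derivative 0) (at w)" for w
    proof (rule ccontr)
      assume "w \<noteq> z"
      hence "R w < R z" "R z < R w" using crit[OF z(1) z(2) that(1)] crit[OF that z(1)] by auto
      thus False by simp
    qed
    have i1: "is_interval {0<..z}" by (auto simp: is_interval_1)
    have i2: "is_interval {z..}" by (auto simp: is_interval_1)
    have inj1: "inj_on R {0<..z}"
    proof (rule inj[OF _ i1])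
      fix a b w assume w: "a \<in> {0<..z}" "b \<in> {0<..z}" "min a b < w" "w < max a b"
        "(R has_real_derivative 0) (at w)"
      have "w > 0" "w < z" using w by (auto simp: min_def max_def split: if_splits)
      thus False using uniq[OF _ w(5)] by simp
    qed auto
    have inj2: "inj_on R {z..}"
    proof (rule inj[OF _ i2])
      fix a b w assume w: "a \<in> {z..}" "b \<in> {z..}" "min a b < w" "w < max a b"
        "(R has_real_derivative 0) (at w)"
      have "w > z" using w by (auto simp: min_def max_def split: if_splits)
      thus False using uniq[OF _ w(5)] z by simp
    qed (use z in auto)
    have c1: "continuous_on {0<..z} R" by (rule continuous_on_subset[OF cont]) auto
    have c2: "continuous_on {z..} R" by (rule continuous_on_subset[OF cont]) (use z in auto)
    have m1: "strict_mono_on {0<..z} R \<or> strict_antimono_on {0<..z} R"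
      using injective_eq_monotone_map[OF i1 c1] inj1 by blast
    have m2: "strict_mono_on {z..} R \<or> strict_antimono_on {z..} R"
      using injective_eq_monotone_map[OF i2 c2] inj2 by blast
    have "\<not> strict_antimono_on {0<..z} R"
    proof
      assume "strict_antimono_on {0<..z} R"
      hence "R z < R (z/2)" using z unfolding monotone_on_def by auto
      moreover have "R (z/2) < R z" using crit[OF z, of "z/2"] z by simp
      ultimately show False by simp
    qed
    with m1 have s1: "strict_mono_on {0<..z} R" by blast
    have "\<not> strict_mono_on {z..} R"
    proof
      assume "strict_mono_on {z..} R"
      hence "R z < R (z+1)" using z unfolding monotone_on_def by auto
      moreover have "R (z+1) < R z" using crit[OF z, of "z+1"] z by simp
      ultimately show False by simp
    qed
    with m2 have s2: "strict_antimono_on {z..} R" by blast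
    have "strict_mono_on {0<..<z} R" by (rule monotone_on_subset[OF s1]) auto
    moreover have "strict_antimono_on {z<..} R" by (rule monotone_on_subset[OF s2]) auto
    ultimately show ?thesis using z unfolding R_def by blast
  next
    case False
    have inj0: "inj_on R {0<..}"
    proof (rule inj)
      fix a b w assume w: "a \<in> {0<..}" "b \<in> {0<..}" "min a b < w" "w < max a b"
        "(R has_real_derivative 0) (at w)"
      have "w > 0" using w by (auto simp: min_def max_def split: if_splits)
      thus False using False w(5) by blast
    qed (auto simp: is_interval_1)
    have "strict_mono_on {0<..} R \<or> strict_antimono_on {0<..} R"
      using injective_eq_monotone_map[of "{0<..}" R] inj0 cont by (auto simp: is_interval_1)
    moreover have "\<not> strict_mono_on {0<..} R"
    proof
      assume sm: "strict_mono_on {0<..} R"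
      obtain x2 X where x2: "x2 > 0" "\<And>x. x \<ge> X \<Longrightarrow> R x < R x2"
        using not_incr[OF g_pos f g t0 mono] unfolding R_def by blast
      define x where "x = max X (x2 + 1)"
      have "x2 < x" "0 < x" using x2(1) unfolding x_def by auto
      hence "R x2 < R x" using sm x2(1) unfolding strict_mono_on_def by auto
      moreover have "R x < R x2" using x2(2)[of x] unfolding x_def by simp
      ultimately show False by simp
    qed
    ultimately show ?thesis unfolding R_def by blast
  qed
qed

lemma deriv_nonpos_of_anti:
  fixes f :: "real \<Rightarrow> real"
  assumes d: "(f has_real_derivative D) (at x)" and a: "strict_antimono_on {0<..} f" and x: "x > 0"
  shows "D \<le> 0"
proof (rule ccontr)
  assume "\<not> D \<le> 0"
  then obtain d where d: "d > 0" "\<And>h. h > 0 \<Longrightarrow> h < d \<Longrightarrow> f x < f (x + h)"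
    using DERIV_pos_inc_right[OF d] by force
  have "f x < f (x + d/2)" using d by auto
  moreover have "f (x + d/2) < f x" using a x d(1) unfolding monotone_on_def by auto
  ultimately show False by simp
qed

lemma deriv_nonneg_of_mono:
  fixes f :: "real \<Rightarrow> real"
  assumes d: "(f has_real_derivative D) (at x)" and a: "strict_mono_on {0<..<y0} f" and x: "0 < x" "x < y0"
  shows "D \<ge> 0"
proof (rule ccontr)
  assume "\<not> D \<ge> 0"
  then obtain d where d: "d > 0" "\<And>h. h > 0 \<Longrightarrow> h < d \<Longrightarrow> f x > f (x + h)"
    using DERIV_neg_dec_right[OF d] by force
  define h where "h = min (d/2) ((y0 - x)/2)"
  have "h \<le> (y0 - x)/2" unfolding h_def by (rule min.cobounded2)
  hence h: "h > 0" "h < d" "x + h < y0" using d x unfolding h_def by auto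
  have "f x > f (x + h)" using d h by auto
  moreover have "f x < f (x + h)" using a x h unfolding monotone_on_def by auto
  ultimately show False by simp
qed

lemma IC_pos_u: "(\<And>t. t > 0 \<Longrightarrow> g t > 0) \<Longrightarrow> t > 0 \<Longrightarrow> g t * ln (t + 1) > (0::real)"
  by (simp add: mult_pos_pos)

lemma ratio_u: "t > 0 \<Longrightarrow> (f t * ln (t + 1)) / (g t * ln (t + 1)) = f t / (g t :: real)"
  by simp

lemma case1:
  fixes f g :: "real \<Rightarrow> real" and t0 :: real and L :: ereal
  assumes g_pos: "\<And>t. t > 0 \<Longrightarrow> g t > 0" and f: "IC f" and g: "IC g" and t0: "t0 > 0"
    and mono: "strict_mono_on {0<..<t0} (\<lambda>t. f t / g t)"
    and anti: "strict_antimono_on {t0<..} (\<lambda>t. f t / g t)"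
    and H_lim: "((\<lambda>x. ereal (H_fun (transf f) (transf g) x)) \<longlongrightarrow> L) (at_right 0)"
  shows "(strict_antimono_on {0<..} (\<lambda>x. transf f x / transf g x) \<longleftrightarrow> L \<ge> 0) \<and>
         (L < 0 \<longrightarrow> (\<exists>x1>0. strict_mono_on {0<..<x1} (\<lambda>x. transf f x / transf g x) \<and>
                                strict_antimono_on {x1<..} (\<lambda>x. transf f x / transf g x)))"
proof -
  define F where "F = transf f"
  define G where "G = transf g"
  define fu where "fu = (\<lambda>t. f t * ln (t + 1))"
  define gu where "gu = (\<lambda>t. g t * ln (t + 1))"
  define R where "R = (\<lambda>x. F x / G x)"
  define S where "S = (\<lambda>x. transf fu x / transf gu x)"
  define H where "H = H_fun F G"
  have fu: "IC fu" unfolding fu_def by (rule IC_u[OF f])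
  have gu: "IC gu" unfolding gu_def by (rule IC_u[OF g])
  have gu_pos: "\<And>t. t > 0 \<Longrightarrow> gu t > 0" unfolding gu_def by (rule IC_pos_u[OF g_pos])
  have Gp: "\<And>x. x > 0 \<Longrightarrow> G x > 0" unfolding G_def by (rule transf_pos[OF g g_pos])
  have GUp: "\<And>x. x > 0 \<Longrightarrow> transf gu x > 0" by (rule transf_pos[OF gu gu_pos])
  have dF: "\<And>x. x > 0 \<Longrightarrow> (F has_real_derivative - transf fu x) (at x)"
    unfolding F_def fu_def by (rule transf_deriv[OF f])
  have dG: "\<And>x. x > 0 \<Longrightarrow> (G has_real_derivative - transf gu x) (at x)"
    unfolding G_def gu_def by (rule transf_deriv[OF g])
  have Hx: "H x = S x * G x - F x" if x: "x > 0" for x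
    unfolding H_def H_fun_def S_def using DERIV_imp_deriv[OF dF[OF x]] DERIV_imp_deriv[OF dG[OF x]]
    by simp
  define Rd where "Rd = (\<lambda>x. ((- transf fu x) * G x - F x * (- transf gu x)) / (G x * G x))"
  have dR: "\<And>x. x > 0 \<Longrightarrow> (R has_real_derivative Rd x) (at x)"
    unfolding R_def Rd_def F_def G_def fu_def gu_def by (rule R_deriv[OF g_pos f g])
  have RdH: "Rd x = - H x * transf gu x / (G x * G x)" if x: "x > 0" for x
    unfolding Rd_def Hx[OF x] S_def using GUp[OF x] Gp[OF x] by (simp add: field_simps)
  have Rd_pos_iff: "Rd x > 0 \<longleftrightarrow> H x < 0" if x: "x > 0" for x
  proof -
    define p where "p = transf gu x / (G x * G x)"
    have P: "p > 0" using Gp[OF x] GUp[OF x] unfolding p_def by simp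
    have "Rd x = (- H x) * p" unfolding RdH[OF x] p_def by simp
    thus ?thesis using P by (auto simp: zero_less_mult_iff mult_less_0_iff)
  qed
  have Rd_nonpos_iff: "Rd x \<le> 0 \<longleftrightarrow> H x \<ge> 0" if x: "x > 0" for x
    using Rd_pos_iff[OF x] by linarith
  define Sd where "Sd = (\<lambda>x. ((- transf (\<lambda>t. fu t * ln (t + 1)) x) * transf gu x - transf fu x * (- transf (\<lambda>t. gu t * ln (t + 1)) x))
       / (transf gu x * transf gu x))"
  have dS: "\<And>x. x > 0 \<Longrightarrow> (S has_real_derivative Sd x) (at x)"
    unfolding S_def Sd_def by (rule R_deriv[OF gu_pos fu gu])
  have dH: "(H has_real_derivative Sd x * G x) (at x)" if x: "x > 0" for x
  proof -
    have "((\<lambda>y. S y * G y - F y) has_real_derivative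
            (Sd x * G x + (- transf gu x) * S x) - (- transf fu x)) (at x)"
      by (intro DERIV_diff DERIV_mult dS dG dF x)
    moreover have "(Sd x * G x + (- transf gu x) * S x) - (- transf fu x) = Sd x * G x"
      unfolding S_def using GUp[OF x] by simp
    ultimately have "((\<lambda>y. S y * G y - F y) has_real_derivative Sd x * G x) (at x)" by simp
    thus ?thesis
      by (rule has_field_derivative_transform_within_open[where S="{0<..}"]) (use x Hx in auto)
  qed
  have monou: "strict_mono_on {0<..<t0} (\<lambda>t. fu t / gu t)"
    using mono unfolding fu_def gu_def monotone_on_def by auto
  have antiu: "strict_antimono_on {t0<..} (\<lambda>t. fu t / gu t)"
    using anti t0 unfolding fu_def gu_def monotone_on_def by auto
  have shR: "strict_antimono_on {0<..} R \<or>
    (\<exists>x0>0. strict_mono_on {0<..<x0} R \<and> strict_antimono_on {x0<..} R)"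
    unfolding R_def F_def G_def by (rule shape_lemma[OF g_pos f g t0 mono anti])
  have shS: "strict_antimono_on {0<..} S \<or>
    (\<exists>x0>0. strict_mono_on {0<..<x0} S \<and> strict_antimono_on {x0<..} S)"
    unfolding S_def by (rule shape_lemma[OF gu_pos fu gu t0 monou antiu])
  have Hlim: "((\<lambda>x. ereal (H x)) \<longlongrightarrow> L) (at_right 0)" using H_lim unfolding H_def F_def G_def .
  have A: "L \<ge> 0" if am: "strict_antimono_on {0<..} R"
  proof -
    have Hn: "H x \<ge> 0" if x: "x > 0" for x
      using deriv_nonpos_of_anti[OF dR[OF x] am x] Rd_nonpos_iff[OF x] by simp
    have "\<forall>\<^sub>F x in at_right 0. ereal 0 \<le> ereal (H x)"
      using eventually_at_right_less[of "0::real"] by eventually_elim (use Hn in auto)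
    from tendsto_lowerbound[OF Hlim this] show ?thesis by (simp add: zero_ereal_def)
  qed
  have B: False if L0: "L \<ge> 0" and x0: "x0 > 0" and m0: "strict_mono_on {0<..<x0} R"
      and a0: "strict_antimono_on {x0<..} R" for x0
  proof -
    have negH: "\<exists>\<xi>. m/4 < \<xi> \<and> \<xi> < m/2 \<and> H \<xi> < 0" if m: "0 < m" "m \<le> x0" for m
    proof -
      obtain z where z: "m/4 < z" "z < m/2" "R (m/2) - R (m/4) = (m/2 - m/4) * Rd z"
        using MVT2[of "m/4" "m/2" R Rd] dR m by force
      have "R (m/4) < R (m/2)" using m0 m unfolding monotone_on_def by auto
      hence "(m/2 - m/4) * Rd z > 0" using z(3) by simp
      hence "Rd z > 0" using m by (simp add: zero_less_mult_iff)
      hence "H z < 0" using Rd_pos_iff[of z] z m by auto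
      thus ?thesis using z by blast
    qed
    from shS show False
    proof
      assume aS: "strict_antimono_on {0<..} S"
      have Sd0: "Sd x \<le> 0" if "x > 0" for x by (rule deriv_nonpos_of_anti[OF dS[OF that] aS that])
      obtain \<xi> where xi: "x0/4 < \<xi>" "\<xi> < x0/2" "H \<xi> < 0" using negH[OF x0] by auto
      have Hle: "H x \<le> H \<xi>" if "x \<ge> \<xi>" for x
      proof (rule DERIV_nonpos_imp_nonincreasing[OF that])
        fix y assume "\<xi> \<le> y" "y \<le> x"
        hence y: "y > 0" using xi x0 by linarith
        show "\<exists>D. (H has_real_derivative D) (at y) \<and> D \<le> 0"
          using dH[OF y] Sd0[OF y] Gp[OF y] by (intro exI[of _ "Sd y * G y"]) (auto simp: mult_nonpos_nonneg)
      qed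
      obtain z where z: "x0+1 < z" "z < x0+2" "R (x0+2) - R (x0+1) = ((x0+2) - (x0+1)) * Rd z"
        using MVT2[of "x0+1" "x0+2" R Rd] dR x0 by force
      have "H z < 0" using Hle[of z] xi z x0 by linarith
      hence "Rd z > 0" using Rd_pos_iff[of z] z x0 by auto
      moreover have "R (x0+2) < R (x0+1)" using a0 x0 unfolding monotone_on_def by auto
      ultimately show False using z(3) by simp
    next
      assume "\<exists>y0>0. strict_mono_on {0<..<y0} S \<and> strict_antimono_on {y0<..} S"
      then obtain y0 where y0: "y0 > 0" "strict_mono_on {0<..<y0} S" by blast
      define m where "m = min x0 y0"
      have m: "0 < m" "m \<le> x0" "m \<le> y0" using x0 y0 unfolding m_def by auto
      obtain \<xi> where xi: "m/4 < \<xi>" "\<xi> < m/2" "H \<xi> < 0" using negH[OF m(1,2)] by auto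
      have Hle: "H x \<le> H \<xi>" if "0 < x" "x \<le> \<xi>" for x
      proof (rule DERIV_nonneg_imp_nondecreasing[OF that(2)])
        fix y assume "x \<le> y" "y \<le> \<xi>"
        hence y: "0 < y" "y < y0" using that xi m by linarith+
        show "\<exists>D. (H has_real_derivative D) (at y) \<and> D \<ge> 0"
          using dH[OF y(1)] deriv_nonneg_of_mono[OF dS[OF y(1)] y0(2) y] Gp[OF y(1)]
          by (intro exI[of _ "Sd y * G y"]) auto
      qed
      have "\<forall>\<^sub>F x in at_right 0. ereal (H x) \<le> ereal (H \<xi>)"
      proof -
        have xi0: "0 < \<xi>" using xi m by linarith
        show ?thesis unfolding eventually_at_right[OF xi0]
          by (rule exI[of _ \<xi>]) (use xi0 Hle in auto)
      qed
      from tendsto_upperbound[OF Hlim this] have "L \<le> ereal (H \<xi>)" by simp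
      with L0 have "0 \<le> ereal (H \<xi>)" by (rule order_trans)
      thus False using xi by (simp add: zero_ereal_def)
    qed
  qed
  show ?thesis
  proof (intro conjI impI iffI)
    assume "strict_antimono_on {0<..} (\<lambda>x. transf f x / transf g x)"
    thus "L \<ge> 0" using A unfolding R_def F_def G_def by simp
  next
    assume L0: "L \<ge> 0"
    show "strict_antimono_on {0<..} (\<lambda>x. transf f x / transf g x)"
      using shR B[OF L0] unfolding R_def F_def G_def by blast
  next
    assume L0: "L < 0"
    show "\<exists>x1>0. strict_mono_on {0<..<x1} (\<lambda>x. transf f x / transf g x) \<and>
                strict_antimono_on {x1<..} (\<lambda>x. transf f x / transf g x)"
      using shR A L0 unfolding R_def F_def G_def by force
  qed
qed


lemma mono_neg_iff:
  fixes h :: "real \<Rightarrow> real"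
  shows "strict_antimono_on A (\<lambda>x. - h x) \<longleftrightarrow> strict_mono_on A h"
    and "strict_mono_on A (\<lambda>x. - h x) \<longleftrightarrow> strict_antimono_on A h"
  unfolding monotone_on_def by auto

lemma transf_neg: "transf (\<lambda>t. - f t) x = - transf f x"
  unfolding transf_def set_lebesgue_integral_def by simp

lemma IC_neg: assumes "IC f" "IC g" shows "IC (\<lambda>t. - f t)"
proof -
  have "IC (\<lambda>t. (-1) * f t + 0 * g t)" by (rule IC_lin(1)[OF assms])
  thus ?thesis by simp
qed

theorem corollary16:
  fixes f g :: "real \<Rightarrow> real" and t0 :: real and L :: ereal
  assumes g_pos: "\<And>t. t > 0 \<Longrightarrow> g t > 0"
    and f_int: "\<And>x. x > 0 \<Longrightarrow> set_integrable lborel {0<..} (\<lambda>t. f t * (t + 1) powr (- x))"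
    and g_int: "\<And>x. x > 0 \<Longrightarrow> set_integrable lborel {0<..} (\<lambda>t. g t * (t + 1) powr (- x))"
    and t0_pos: "t0 > 0"
    and H_lim: "((\<lambda>x. ereal (H_fun (transf f) (transf g) x)) \<longlongrightarrow> L) (at_right 0)"
  shows
    "(strict_mono_on {0<..<t0} (\<lambda>t. f t / g t) \<and> strict_antimono_on {t0<..} (\<lambda>t. f t / g t) \<longrightarrow>
        ((strict_antimono_on {0<..} (\<lambda>x. transf f x / transf g x) \<longleftrightarrow> L \<ge> 0) \<and>
         (L < 0 \<longrightarrow> (\<exists>x1>0. strict_mono_on {0<..<x1} (\<lambda>x. transf f x / transf g x) \<and>
                                strict_antimono_on {x1<..} (\<lambda>x. transf f x / transf g x)))))
     \<and>
     (strict_antimono_on {0<..<t0} (\<lambda>t. f t / g t) \<and> strict_mono_on {t0<..} (\<lambda>t. f t / g t) \<longrightarrow>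
        ((strict_mono_on {0<..} (\<lambda>x. transf f x / transf g x) \<longleftrightarrow> L \<le> 0) \<and>
         (L > 0 \<longrightarrow> (\<exists>x1>0. strict_antimono_on {0<..<x1} (\<lambda>x. transf f x / transf g x) \<and>
                                strict_mono_on {x1<..} (\<lambda>x. transf f x / transf g x)))))"
proof -
  have f: "IC f" unfolding IC_def using f_int by auto
  have g: "IC g" unfolding IC_def using g_int by auto
  have nf: "IC (\<lambda>t. - f t)" by (rule IC_neg[OF f g])
  have tn: "transf (\<lambda>t. - f t) = (\<lambda>x. - transf f x)" by (rule ext, rule transf_neg)
  have Heq: "H_fun (transf (\<lambda>t. - f t)) (transf g) x = - H_fun (transf f) (transf g) x" if x: "x > 0" for x
  proof -
    have d1: "deriv (transf f) x = - transf (\<lambda>t. f t * ln (t + 1)) x"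
      by (rule DERIV_imp_deriv[OF transf_deriv[OF f x]])
    have d2: "deriv (\<lambda>x. - transf f x) x = - (- transf (\<lambda>t. f t * ln (t + 1)) x)"
      by (rule DERIV_imp_deriv[OF DERIV_minus[OF transf_deriv[OF f x]]])
    show ?thesis unfolding H_fun_def tn d1 d2 by simp
  qed
  have Hl: "((\<lambda>x. ereal (H_fun (transf (\<lambda>t. - f t)) (transf g) x)) \<longlongrightarrow> - L) (at_right 0)"
  proof -
    have "((\<lambda>x. - ereal (H_fun (transf f) (transf g) x)) \<longlongrightarrow> - L) (at_right 0)"
      by (rule tendsto_uminus_ereal[OF H_lim])
    moreover have "\<forall>\<^sub>F x in at_right 0. - ereal (H_fun (transf f) (transf g) x) =
                     ereal (H_fun (transf (\<lambda>t. - f t)) (transf g) x)"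
      using eventually_at_right_less[of "0::real"] by eventually_elim (simp add: Heq)
    ultimately show ?thesis by (rule Lim_transform_eventually)
  qed
  have R_neg: "(\<lambda>x. transf (\<lambda>t. - f t) x / transf g x) = (\<lambda>x. - (transf f x / transf g x))"
    unfolding tn by (rule ext) simp
  have phi_neg: "(\<lambda>t. - f t / g t) = (\<lambda>t. - (f t / g t))" by (rule ext) simp
  show ?thesis
  proof (intro conjI impI)
    assume h: "strict_mono_on {0<..<t0} (\<lambda>t. f t / g t) \<and> strict_antimono_on {t0<..} (\<lambda>t. f t / g t)"
    have c: "(strict_antimono_on {0<..} (\<lambda>x. transf f x / transf g x) \<longleftrightarrow> L \<ge> 0) \<and>
         (L < 0 \<longrightarrow> (\<exists>x1>0. strict_mono_on {0<..<x1} (\<lambda>x. transf f x / transf g x) \<and>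
                                strict_antimono_on {x1<..} (\<lambda>x. transf f x / transf g x)))"
      using h by (intro case1[OF g_pos f g t0_pos _ _ H_lim]) auto
    thus "(strict_antimono_on {0<..} (\<lambda>x. transf f x / transf g x)) = (0 \<le> L)" by blast
    show "L < 0 \<Longrightarrow> \<exists>x1>0. strict_mono_on {0<..<x1} (\<lambda>x. transf f x / transf g x) \<and>
                                strict_antimono_on {x1<..} (\<lambda>x. transf f x / transf g x)"
      using c by blast
  next
    assume h: "strict_antimono_on {0<..<t0} (\<lambda>t. f t / g t) \<and> strict_mono_on {t0<..} (\<lambda>t. f t / g t)"
    have m: "strict_mono_on {0<..<t0} (\<lambda>t. - f t / g t)"
      unfolding phi_neg mono_neg_iff using h by blast
    have a: "strict_antimono_on {t0<..} (\<lambda>t. - f t / g t)"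
      unfolding phi_neg mono_neg_iff using h by blast
    have c: "(strict_antimono_on {0<..} (\<lambda>x. transf (\<lambda>t. - f t) x / transf g x) \<longleftrightarrow> - L \<ge> 0) \<and>
         (- L < 0 \<longrightarrow> (\<exists>x1>0. strict_mono_on {0<..<x1} (\<lambda>x. transf (\<lambda>t. - f t) x / transf g x) \<and>
                                strict_antimono_on {x1<..} (\<lambda>x. transf (\<lambda>t. - f t) x / transf g x)))"
      by (rule case1[OF g_pos nf g t0_pos m a Hl])
    hence c': "(strict_mono_on {0<..} (\<lambda>x. transf f x / transf g x) \<longleftrightarrow> - L \<ge> 0) \<and>
         (- L < 0 \<longrightarrow> (\<exists>x1>0. strict_antimono_on {0<..<x1} (\<lambda>x. transf f x / transf g x) \<and>
                                strict_mono_on {x1<..} (\<lambda>x. transf f x / transf g x)))"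
      unfolding R_neg mono_neg_iff .
    have e1: "(- L \<ge> 0) = (L \<le> 0)" by (cases L) auto
    have e2: "(- L < 0) = (L > 0)" by (cases L) auto
    show "strict_mono_on {0<..} (\<lambda>x. transf f x / transf g x) = (L \<le> 0)"
      using c' e1 by blast
    show "L > 0 \<Longrightarrow> \<exists>x1>0. strict_antimono_on {0<..<x1} (\<lambda>x. transf f x / transf g x) \<and>
                                strict_mono_on {x1<..} (\<lambda>x. transf f x / transf g x)"
      using c' e2 by blast
  qed
qed

end
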